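(* Fix nonnegative integers $s,t$, integers $\tilde\lambda_1\ge\tilde\lambda_2\ge\cdots\ge\tilde\lambda_s\ge0$, and nonnegative integers $\epsilon_1,\dots,\epsilon_t$. For an integer $k\ge\max(s,t)$ set $\tilde\lambda_j=0$ for $s<j\le k$, $\epsilon_j=0$ for $t<j\le k$, and $c_j=k+j-1-\epsilon_j$ for $1\le j\le k$. Then $$\det\bigl((c_i)_{\tilde\lambda_j+k-j}\bigr)_{1\le i,j\le k}=(-1)^{k(k-1)/2}\,\Delta(c)\cdot Q(k),$$ where $Q$ is a polynomial in $k$ (depending on the fixed data) of degree at most $2\sum_i\tilde\lambda_i$.
   Context: $(z)_\mu=z(z-1)\cdots(z-\mu+1)$ denotes the descending factorial (with $(z)_0=1$), and $\Delta(c)=\prod_{1\le i<j\le k}(c_j-c_i)$. *)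

theory Defs
  imports "Jordan_Normal_Form.Determinant" "HOL-Computational_Algebra.Polynomial"
begin

definition desc_fact :: "int \<Rightarrow> nat \<Rightarrow> int" where
  "desc_fact z mu = (\<Prod>i<mu. z - int i)"

text \<open>Extension by zero of a 1-indexed sequence f_1..f_n to all indices j > n.\<close>
definition ext0 :: "nat \<Rightarrow> (nat \<Rightarrow> nat) \<Rightarrow> nat \<Rightarrow> nat" where
  "ext0 n f j = (if j \<le> n then f j else 0)"

definition cseq :: "nat \<Rightarrow> nat \<Rightarrow> (nat \<Rightarrow> nat) \<Rightarrow> nat \<Rightarrow> int" where
  "cseq k t eps j = int k + int j - 1 - int (ext0 t eps j)"

definition vdm :: "nat \<Rightarrow> (nat \<Rightarrow> int) \<Rightarrow> int" where
  "vdm k c = (\<Prod>j\<in>{1..k}. \<Prod>i\<in>{1..<j}. c j - c i)"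

end

theory Submission
  imports Defs "HOL-Computational_Algebra.Formal_Power_Series"
begin

definition ffr :: "'a::comm_ring_1 \<Rightarrow> nat \<Rightarrow> 'a" where
  "ffr x e = (\<Prod>i<e. x - of_nat i)"

lemma desc_fact_ffr: "(of_int (desc_fact z e) :: 'a::comm_ring_1) = ffr (of_int z) e"
  unfolding desc_fact_def ffr_def by (simp add: of_int_prod)

lemma ffr_add: "ffr x (m + e) = ffr x m * ffr (x - of_nat m) e"
proof (induction e)
  case 0 then show ?case by (simp add: ffr_def)
next
  case (Suc e)
  have "ffr x (m + Suc e) = ffr x (m + e) * (x - of_nat (m + e))"
    by (simp add: ffr_def)
  also have "\<dots> = ffr x m * (ffr (x - of_nat m) e * (x - of_nat m - of_nat e))"
    using Suc by (simp add: algebra_simps)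
  also have "ffr (x - of_nat m) e * (x - of_nat m - of_nat e) = ffr (x - of_nat m) (Suc e)"
    by (simp add: ffr_def)
  finally show ?case .
qed

lemma ffr_Suc: "ffr x (Suc e) = ffr x e * (x - of_nat e)"
  by (simp add: ffr_def)

lemma ffr_nat_zero: "i < e \<Longrightarrow> ffr (of_nat i :: 'a::comm_ring_1) e = 0"
  unfolding ffr_def by (rule prod_zero) auto

lemma ffr_nat_self: "ffr (of_nat i :: 'a::{comm_ring_1,semiring_char_0}) i = fact i"
proof (induction i)
  case 0 then show ?case by (simp add: ffr_def)
next
  case (Suc i)
  have "ffr (of_nat (Suc i) :: 'a) (Suc i) = (\<Prod>j<Suc i. of_nat (Suc i) - of_nat j)"
    by (simp add: ffr_def)
  also have "\<dots> = (\<Prod>j<Suc i. of_nat (Suc i - j))"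
    by (intro prod.cong) (auto simp: of_nat_diff)
  also have "\<dots> = of_nat (\<Prod>j<Suc i. Suc i - j)" by simp
  also have "(\<Prod>j<Suc i. Suc i - j) = (\<Prod>j\<in>{1..Suc i}. j)"
    by (rule prod.reindex_bij_witness[where i="\<lambda>j. Suc i - j" and j="\<lambda>j. Suc i - j"]) auto
  also have "of_nat \<dots> = (fact (Suc i) :: 'a)"
    by (simp add: fact_prod)
  finally show ?case .
qed

lemma ffr_gchoose: "ffr (x :: 'a :: field_char_0) m = fact m * (x gchoose m)"
  unfolding gbinomial_mult_fact ffr_def by (simp add: atLeast0LessThan)

lemma ffr_newton:
  fixes x y :: "'a :: field_char_0"
  shows "ffr (x + y) m = (\<Sum>r\<in>{0..m}. of_nat (m choose r) * ffr x r * ffr y (m - r))"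
proof -
  have "ffr (x + y) m = fact m * (\<Sum>r\<in>{0..m}. (x gchoose r) * (y gchoose (m - r)))"
    by (simp add: ffr_gchoose gbinomial_Vandermonde)
  also have "\<dots> = (\<Sum>r\<in>{0..m}. of_nat (m choose r) * ffr x r * ffr y (m - r))"
    unfolding sum_distrib_left
  proof (rule sum.cong[OF refl])
    fix r assume r: "r \<in> {0..m}"
    from binomial_fact_lemma[of r m] r
    have "of_nat (fact r * fact (m - r) * (m choose r)) = (of_nat (fact m) :: 'a)" by simp
    then have fm: "(fact m :: 'a) = fact r * fact (m - r) * of_nat (m choose r)"
      by (simp only: of_nat_mult of_nat_fact)
    show "fact m * ((x gchoose r) * (y gchoose (m - r))) = of_nat (m choose r) * ffr x r * ffr y (m - r)"
      unfolding fm ffr_gchoose by (simp only: mult_ac)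
  qed
  finally show ?thesis .
qed

lemma poly_ffr: "poly (ffr p e) x = ffr (poly p x) e"
  unfolding ffr_def by (simp add: poly_prod)

lemma degree_ffr: "degree (ffr (p :: 'a::field poly) e) \<le> e * degree p"
proof -
  have "degree (ffr p e) \<le> (\<Sum>i<e. degree (p - of_nat i))"
    unfolding ffr_def using degree_prod_sum_le[of "{..<e}" "\<lambda>i. p - of_nat i"] by (simp add: o_def)
  also have "\<dots> \<le> (\<Sum>i<e. degree p)"
    by (intro sum_mono) (simp add: degree_diff_le)
  finally show ?thesis by simp
qed

lemma det_rev_cols_gen:
  assumes A: "A \<in> carrier_mat m m" and p: "p \<le> m"
  shows "det (mat m m (\<lambda>(i,j). A $$ (i, if j < p then p - 1 - j else j))) = (-1)^(p*(p-1) div 2) * det A"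
  using p
proof (induction p)
  case 0
  have "mat m m (\<lambda>(i,j). A $$ (i, if j < 0 then 0 - 1 - j else j)) = A"
    using A by (intro eq_matI) auto
  then show ?case by simp
next
  case (Suc p)
  define Ap where "Ap = mat m m (\<lambda>(i,j). A $$ (i, if j < p then p - 1 - j else j))"
  have Ap: "Ap \<in> carrier_mat m m" unfolding Ap_def by simp
  have le: "p + 1 \<le> m" using Suc by simp
  have "det Ap = (-1)^(p*1) * det (mat m m (\<lambda>(i,j). Ap $$ (i, if j < 1 then j + p else if j < p + 1 then j - 1 else j)))"
    by (rule det_swap_initial_cols[OF Ap le])
  also have "mat m m (\<lambda>(i,j). Ap $$ (i, if j < 1 then j + p else if j < p + 1 then j - 1 else j))
     = mat m m (\<lambda>(i,j). A $$ (i, if j < Suc p then Suc p - 1 - j else j))"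
    using le unfolding Ap_def by (intro eq_matI) auto
  finally have "det (mat m m (\<lambda>(i,j). A $$ (i, if j < Suc p then Suc p - 1 - j else j))) = (-1)^p * det Ap"
    by (simp add: power_mult_distrib)
  also have "det Ap = (-1)^(p*(p-1) div 2) * det A" using Suc unfolding Ap_def by simp
  also have "(-1::'a)^p * ((-1)^(p*(p-1) div 2) * det A) = (-1)^(Suc p * (Suc p - 1) div 2) * det A"
  proof -
    have "Suc p * (Suc p - 1) div 2 = p + p*(p-1) div 2"
    proof (cases p)
      case 0 then show ?thesis by simp
    next
      case (Suc q)
      have "Suc p * p = 2 * p + p * q" using Suc by simp
      then show ?thesis using Suc by simp
    qed
    then show ?thesis by (simp add: power_add)
  qed
  finally show ?case .
qed

lemma det_rev_cols:
  assumes A: "A \<in> carrier_mat n n"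
  shows "det (mat n n (\<lambda>(i,j). A $$ (i, n - 1 - j))) = (-1)^(n*(n-1) div 2) * det A"
proof -
  have "mat n n (\<lambda>(i,j). A $$ (i, n - 1 - j)) = mat n n (\<lambda>(i,j). A $$ (i, if j < n then n - 1 - j else j))"
    by (intro eq_matI) auto
  then show ?thesis using det_rev_cols_gen[OF A le_refl] by simp
qed

lemma det_scale_rows:
  assumes A: "A \<in> carrier_mat n n"
  shows "det (mat n n (\<lambda>(i,j). d i * A $$ (i,j))) = (\<Prod>i<n. d i) * det A"
proof -
  have B: "mat n n (\<lambda>(i,j). d i * A $$ (i,j)) \<in> carrier_mat n n" by simp
  show ?thesis
    unfolding det_def'[OF A] det_def'[OF B] sum_distrib_left
  proof (rule sum.cong[OF refl])
    fix p assume p: "p \<in> {p. p permutes {0..<n}}"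
    then have "\<And>i. i < n \<Longrightarrow> p i < n" by (auto dest: permutes_in_image)
    then have "(\<Prod>i = 0..<n. mat n n (\<lambda>(i,j). d i * A $$ (i,j)) $$ (i, p i)) = (\<Prod>i = 0..<n. d i * A $$ (i, p i))"
      by (intro prod.cong) auto
    also have "\<dots> = (\<Prod>i<n. d i) * (\<Prod>i = 0..<n. A $$ (i, p i))"
      by (simp add: prod.distrib atLeast0LessThan)
    finally show "signof p * (\<Prod>i = 0..<n. mat n n (\<lambda>(i,j). d i * A $$ (i,j)) $$ (i, p i)) =
       (\<Prod>i<n. d i) * (signof p * (\<Prod>i = 0..<n. A $$ (i, p i)))" by simp
  qed
qed

lemma det_cols_leibniz:
  assumes A: "A \<in> carrier_mat n n"
  shows "det A = (\<Sum>p \<in> {p. p permutes {0..<n}}. signof p * (\<Prod>j<n. A $$ (p j, j)))"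
proof -
  have At: "transpose_mat A \<in> carrier_mat n n" using A by simp
  have "det A = det (transpose_mat A)" using det_transpose[OF A] by simp
  also have "\<dots> = (\<Sum>p \<in> {p. p permutes {0..<n}}. signof p * (\<Prod>j = 0..<n. transpose_mat A $$ (j, p j)))"
    by (rule det_def'[OF At])
  also have "\<dots> = (\<Sum>p \<in> {p. p permutes {0..<n}}. signof p * (\<Prod>j<n. A $$ (p j, j)))"
  proof (rule sum.cong[OF refl])
    fix p assume p: "p \<in> {p. p permutes {0..<n}}"
    then have "\<And>i. i < n \<Longrightarrow> p i < n" by (auto dest: permutes_in_image)
    then show "signof p * (\<Prod>j = 0..<n. transpose_mat A $$ (j, p j)) = signof p * (\<Prod>j<n. A $$ (p j, j))"
      using A by (auto simp: atLeast0LessThan intro!: prod.cong)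
  qed
  finally show ?thesis .
qed

lemma det_col_expand:
  fixes Z :: "nat \<Rightarrow> nat \<Rightarrow> 'a::comm_ring_1"
  assumes R: "finite R"
  shows "det (mat n n (\<lambda>(i,j). \<Sum>r\<in>R. Z i r * g r j)) =
    (\<Sum>f \<in> PiE {..<n} (\<lambda>_. R). (\<Prod>j<n. g (f j) j) * det (mat n n (\<lambda>(i,j). Z i (f j))))"
proof -
  let ?P = "{p. p permutes {0..<n}}"
  have fP: "finite ?P" by (simp add: finite_permutations)
  have "det (mat n n (\<lambda>(i,j). \<Sum>r\<in>R. Z i r * g r j)) =
     (\<Sum>p \<in> ?P. signof p * (\<Prod>j<n. \<Sum>r\<in>R. Z (p j) r * g r j))"
  proof -
    have "det (mat n n (\<lambda>(i,j). \<Sum>r\<in>R. Z i r * g r j)) = 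
      (\<Sum>p \<in> ?P. signof p * (\<Prod>j<n. mat n n (\<lambda>(i,j). \<Sum>r\<in>R. Z i r * g r j) $$ (p j, j)))"
      by (rule det_cols_leibniz) simp
    also have "\<dots> = (\<Sum>p \<in> ?P. signof p * (\<Prod>j<n. \<Sum>r\<in>R. Z (p j) r * g r j))"
    proof (rule sum.cong[OF refl])
      fix p assume p: "p \<in> ?P"
      then have "\<And>i. i < n \<Longrightarrow> p i < n" by (auto dest: permutes_in_image)
      then show "signof p * (\<Prod>j<n. mat n n (\<lambda>(i,j). \<Sum>r\<in>R. Z i r * g r j) $$ (p j, j)) =
          signof p * (\<Prod>j<n. \<Sum>r\<in>R. Z (p j) r * g r j)"
        by (auto intro!: prod.cong)
    qed
    finally show ?thesis .
  qed
  also have "\<dots> = (\<Sum>p \<in> ?P. signof p * (\<Sum>f \<in> PiE {..<n} (\<lambda>_. R). \<Prod>j<n. Z (p j) (f j) * g (f j) j))"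
    by (subst prod_sum_PiE) (auto simp: R)
  also have "\<dots> = (\<Sum>p \<in> ?P. \<Sum>f \<in> PiE {..<n} (\<lambda>_. R). (\<Prod>j<n. g (f j) j) * (signof p * (\<Prod>j<n. Z (p j) (f j))))"
    by (simp add: sum_distrib_left prod.distrib mult_ac)
  also have "\<dots> = (\<Sum>f \<in> PiE {..<n} (\<lambda>_. R). \<Sum>p \<in> ?P. (\<Prod>j<n. g (f j) j) * (signof p * (\<Prod>j<n. Z (p j) (f j))))"
    by (rule sum.swap)
  also have "\<dots> = (\<Sum>f \<in> PiE {..<n} (\<lambda>_. R). (\<Prod>j<n. g (f j) j) * det (mat n n (\<lambda>(i,j). Z i (f j))))"
  proof (rule sum.cong[OF refl])
    fix f
    have "det (mat n n (\<lambda>(i,j). Z i (f j))) = (\<Sum>p \<in> ?P. signof p * (\<Prod>j<n. mat n n (\<lambda>(i,j). Z i (f j)) $$ (p j, j)))"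
      by (rule det_cols_leibniz) simp
    also have "\<dots> = (\<Sum>p \<in> ?P. signof p * (\<Prod>j<n. Z (p j) (f j)))"
    proof (rule sum.cong[OF refl])
      fix p assume p: "p \<in> ?P"
      then have "\<And>i. i < n \<Longrightarrow> p i < n" by (auto dest: permutes_in_image)
      then show "signof p * (\<Prod>j<n. mat n n (\<lambda>(i,j). Z i (f j)) $$ (p j, j)) = signof p * (\<Prod>j<n. Z (p j) (f j))"
        by (auto intro!: prod.cong)
    qed
    finally show "(\<Sum>p \<in> ?P. (\<Prod>j<n. g (f j) j) * (signof p * (\<Prod>j<n. Z (p j) (f j)))) =
        (\<Prod>j<n. g (f j) j) * det (mat n n (\<lambda>(i,j). Z i (f j)))"
      by (simp add: sum_distrib_left)
  qed
  finally show ?thesis .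
qed

lemma sum_card_lower:
  "finite A \<Longrightarrow> card A = n \<Longrightarrow> (\<Sum>j<n. j) \<le> (\<Sum>A :: nat)"
proof (induction n arbitrary: A)
  case 0 then show ?case by simp
next
  case (Suc n)
  then have fA: "finite A" and cA: "card A = Suc n" by auto
  then have ne: "A \<noteq> {}" by auto
  define x where "x = Max A"
  have xA: "x \<in> A" unfolding x_def using fA ne by (rule Max_in)
  have sub: "A \<subseteq> {0..x}" unfolding x_def using fA by auto
  have "card A \<le> card {0..x}" using sub by (intro card_mono) auto
  then have xn: "n \<le> x" using cA by simp
  have c: "card (A - {x}) = n" using cA xA fA by simp
  have fA': "finite (A - {x})" using fA by simp
  have ih: "(\<Sum>j<n. j) \<le> \<Sum>(A - {x})" by (rule Suc.IH[OF fA' c])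
  have sA: "\<Sum>A = x + \<Sum>(A - {x})" using fA xA by (rule sum.remove)
  have "(\<Sum>j<Suc n. j) = n + (\<Sum>j<n. j)" by simp
  then show ?case using ih sA xn by linarith
qed

lemma sum_inj_lower:
  assumes "inj_on f {..<n}"
  shows "(\<Sum>j<n. j) \<le> (\<Sum>j<n. f j :: nat)"
proof -
  have "(\<Sum>j<n. f j) = \<Sum>(f ` {..<n})" using assms by (simp add: sum.reindex)
  moreover have "card (f ` {..<n}) = n" using assms by (simp add: card_image)
  ultimately show ?thesis using sum_card_lower[of "f ` {..<n}" n] by simp
qed

lemma mat_mult_entry:
  "i < nr \<Longrightarrow> j < nc \<Longrightarrow> (mat nr m f * mat m nc g) $$ (i,j) = (\<Sum>r<m. f (i,r) * g (r,j))"
  by (simp add: scalar_prod_def atLeast0LessThan)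

lemma det_upper_tri':
  assumes "A \<in> carrier_mat n n" "\<And>i j. j < i \<Longrightarrow> i < n \<Longrightarrow> A $$ (i,j) = 0"
  shows "det A = (\<Prod>i<n. A $$ (i,i))"
proof -
  have "upper_triangular A" using assms unfolding upper_triangular_def by auto
  then have "det A = prod_list (diag_mat A)" using assms(1) by (rule det_upper_triangular)
  then show ?thesis using assms(1) by (simp add: prod_list_diag_prod atLeast0LessThan)
qed

lemma det_lower_tri':
  assumes "A \<in> carrier_mat n n" "\<And>i j. i < j \<Longrightarrow> j < n \<Longrightarrow> A $$ (i,j) = 0"
  shows "det A = (\<Prod>i<n. A $$ (i,i))"
proof -
  have "det A = prod_list (diag_mat A)" using assms(2,1) by (rule det_lower_triangular)
  then show ?thesis using assms(1) by (simp add: prod_list_diag_prod atLeast0LessThan)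
qed

lemma core:
  fixes u :: rat and b :: "nat \<Rightarrow> rat" and \<mu> :: "nat \<Rightarrow> nat" and n L B :: nat
  assumes \<mu>B: "\<And>j. j < L \<Longrightarrow> \<mu> j < B"
  defines "x \<equiv> \<lambda>i. if i < n then u + of_nat i else u + b (i - n)"
  and "cm \<equiv> \<lambda>j. if j < n then j else n + \<mu> (j - n)"
  shows "det (mat (n+L) (n+L) (\<lambda>(i,j). ffr (x i) (cm j))) = (\<Prod>i<n. fact i) *
     det (mat L L (\<lambda>(i,j). \<Sum>r\<in>{n..<n+B}. ffr (b i) r * of_nat ((n + \<mu> j) choose r) * ffr u (n + \<mu> j - r)))"
proof -
  define K where "K = n + L"
  define N where "N = n + B"
  define Y where "Y = (\<lambda>i r. ffr (x i - u) r)"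
  define W where "W = (\<lambda>r j. (of_nat (cm j choose r) :: rat) * ffr u (cm j - r))"
  define Ym where "Ym = mat K N (\<lambda>(i,r). Y i r)"
  define Wm where "Wm = mat N K (\<lambda>(r,j). W r j)"
  define M where "M = mat K K (\<lambda>(i,j). ffr (x i) (cm j))"
  have Ym: "Ym \<in> carrier_mat K N" and Wm: "Wm \<in> carrier_mat N K" and Mc: "M \<in> carrier_mat K K"
    unfolding Ym_def Wm_def M_def by auto
  have cmN: "cm j < N" if "j < K" for j
    using that \<mu>B[of "j - n"] unfolding cm_def K_def N_def by auto
  have Yzero: "Y i r = 0" if "i < n" "i < r" for i r
    using that unfolding Y_def x_def by (simp add: ffr_nat_zero)
  have Wzero: "W r j = 0" if "cm j < r" for r j
    using that unfolding W_def by simp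
  have newton: "ffr (x i) (cm j) = (\<Sum>r<N. Y i r * W r j)" if j: "j < K" for i j
  proof -
    have "ffr (x i) (cm j) = ffr ((x i - u) + u) (cm j)" by simp
    also have "\<dots> = (\<Sum>r\<in>{0..cm j}. of_nat (cm j choose r) * ffr (x i - u) r * ffr u (cm j - r))"
      by (rule ffr_newton)
    also have "\<dots> = (\<Sum>r\<in>{0..cm j}. Y i r * W r j)"
      unfolding Y_def W_def by (simp add: mult_ac)
    also have "\<dots> = (\<Sum>r<N. Y i r * W r j)"
      using cmN[OF j] Wzero by (intro sum.mono_neutral_left) auto
    finally show ?thesis .
  qed
  have M_eq: "M = Ym * Wm"
    unfolding M_def Ym_def Wm_def
    by (rule eq_matI) (auto simp: newton scalar_prod_def atLeast0LessThan)
  define Wb where "Wb = mat n n (\<lambda>(r,j). W r j)"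
  have Wb: "Wb \<in> carrier_mat n n" unfolding Wb_def by simp
  have detWb: "det Wb = 1"
  proof -
    have "det Wb = (\<Prod>i<n. Wb $$ (i,i))"
      by (rule det_upper_tri'[OF Wb]) (auto simp: Wb_def Wzero cm_def)
    also have "\<dots> = 1" by (simp add: Wb_def W_def cm_def ffr_def)
    finally show ?thesis .
  qed
  obtain Wi where Wi: "Wi \<in> carrier_mat n n" "Wb * Wi = 1\<^sub>m n"
    using det_non_zero_imp_unit[OF Wb, of undefined] detWb
    unfolding Units_def ring_mat_def by auto
  define Cm where "Cm = mat n L (\<lambda>(r,j). W r (n + j))"
  have Cm: "Cm \<in> carrier_mat n L" unfolding Cm_def by simp
  define X where "X = Wi * Cm"
  have X: "X \<in> carrier_mat n L" unfolding X_def using Wi Cm by simp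
  have WbX: "Wb * X = Cm"
  proof -
    have "Wb * X = (Wb * Wi) * Cm" unfolding X_def using assoc_mult_mat[OF Wb Wi(1) Cm] by simp
    also have "\<dots> = Cm" using Wi Cm by (simp add: left_mult_one_mat)
    finally show ?thesis .
  qed
  have WbX_entry: "(\<Sum>l<n. W r l * X $$ (l, j)) = W r (n + j)" if "r < n" "j < L" for r j
  proof -
    have "(Wb * X) $$ (r, j) = (\<Sum>l<n. W r l * X $$ (l, j))"
      using that X by (simp add: Wb_def scalar_prod_def atLeast0LessThan)
    then show ?thesis using WbX that by (simp add: Cm_def)
  qed
  define V where "V = four_block_mat (1\<^sub>m n) (- X) (0\<^sub>m L n) (1\<^sub>m L)"
  have V: "V \<in> carrier_mat K K" unfolding V_def K_def using X by simp
  have detV: "det V = 1"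
    unfolding V_def by (subst det_four_block_mat_lower_left_zero[of _ n _ L]) (use X in auto)
  have WV: "(Wm * V) $$ (r, j) = (if j < n \<or> n \<le> r then W r j else 0)" if r: "r < N" and j: "j < K" for r j
  proof -
    have "(Wm * V) $$ (r, j) = (\<Sum>l<K. W r l * V $$ (l, j))"
      using r j Wm V by (simp add: Wm_def scalar_prod_def atLeast0LessThan)
    also have "\<dots> = (if j < n \<or> n \<le> r then W r j else 0)"
    proof (cases "j < n")
      case True
      have "(\<Sum>l<K. W r l * V $$ (l, j)) = (\<Sum>l<K. if l = j then W r j else 0)"
        using True X by (intro sum.cong) (auto simp: V_def K_def)
      also have "\<dots> = W r j" using j by simp
      finally show ?thesis using True by simp
    next
      case False
      have split: "{..<K} = {..<n} \<union> {n..<K}" unfolding K_def by auto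
      have "(\<Sum>l<K. W r l * V $$ (l, j)) = (\<Sum>l<n. W r l * V $$ (l, j)) + (\<Sum>l\<in>{n..<K}. W r l * V $$ (l, j))"
        unfolding split by (rule sum.union_disjoint) auto
      also have "(\<Sum>l\<in>{n..<K}. W r l * V $$ (l, j)) = (\<Sum>l\<in>{n..<K}. if l = j then W r j else 0)"
        using False j X by (intro sum.cong) (auto simp: V_def K_def split: if_splits)
      also have "\<dots> = W r j" using j False by (simp add: K_def)
      also have "(\<Sum>l<n. W r l * V $$ (l, j)) = - (\<Sum>l<n. W r l * X $$ (l, j - n))"
        using False j X by (auto simp: V_def K_def sum_negf[symmetric] intro!: sum.cong)
      finally have eq: "(\<Sum>l<K. W r l * V $$ (l, j)) = W r j - (\<Sum>l<n. W r l * X $$ (l, j - n))" by simp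
      show ?thesis
      proof (cases "n \<le> r")
        case True
        have "(\<Sum>l<n. W r l * X $$ (l, j - n)) = 0"
          using True by (intro sum.neutral) (auto simp: Wzero cm_def)
        then show ?thesis using eq True by simp
      next
        case nr: False
        have "(\<Sum>l<n. W r l * X $$ (l, j - n)) = W r (n + (j - n))"
          using nr False j by (intro WbX_entry) (auto simp: K_def)
        then show ?thesis using eq nr False by simp
      qed
    qed
    finally show ?thesis .
  qed
  define S where "S = mat n n (\<lambda>(i,j). ffr (x i) (cm j))"
  define P where "P = mat L L (\<lambda>(i,j). \<Sum>r\<in>{n..<N}. Y (n + i) r * W r (n + j))"
  define Z where "Z = mat L n (\<lambda>(i,j). (M * V) $$ (n + i, j))"
  have MV_entry: "(M * V) $$ (i, j) = (\<Sum>r<N. Y i r * (Wm * V) $$ (r, j))" if "i < K" "j < K" for i j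
  proof -
    have "M * V = Ym * (Wm * V)" unfolding M_eq using Ym Wm V by (simp add: assoc_mult_mat)
    then show ?thesis using that Ym Wm V by (simp add: Ym_def scalar_prod_def atLeast0LessThan)
  qed
  have MV: "M * V = four_block_mat S (0\<^sub>m n L) Z P"
  proof (rule eq_matI)
    fix i j assume i: "i < dim_row (four_block_mat S (0\<^sub>m n L) Z P)" and j: "j < dim_col (four_block_mat S (0\<^sub>m n L) Z P)"
    then have i: "i < K" and j: "j < K" by (auto simp: S_def P_def K_def)
    show "(M * V) $$ (i, j) = four_block_mat S (0\<^sub>m n L) Z P $$ (i, j)"
    proof (cases "i < n")
      case iT: True
      have split: "{..<N} = {..<n} \<union> {n..<N}" unfolding N_def by auto
      have sum_split: "(\<Sum>r<N. Y i r * (Wm * V) $$ (r, j)) = (\<Sum>r<n. Y i r * (Wm * V) $$ (r, j))"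
      proof -
        have "(\<Sum>r<N. Y i r * (Wm * V) $$ (r, j)) = (\<Sum>r<n. Y i r * (Wm * V) $$ (r, j)) + (\<Sum>r\<in>{n..<N}. Y i r * (Wm * V) $$ (r, j))"
          unfolding split by (rule sum.union_disjoint) auto
        also have "(\<Sum>r\<in>{n..<N}. Y i r * (Wm * V) $$ (r, j)) = 0"
          using iT by (intro sum.neutral) (auto simp: Yzero)
        finally show ?thesis by simp
      qed
      show ?thesis
      proof (cases "j < n")
        case jT: True
        have "(\<Sum>r<n. Y i r * (Wm * V) $$ (r, j)) = (\<Sum>r<n. Y i r * W r j)"
          using jT j by (intro sum.cong) (auto simp: WV N_def)
        then have "(M * V) $$ (i, j) = (\<Sum>r<n. Y i r * W r j)"
          using MV_entry[OF i j] sum_split by simp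
        also have "\<dots> = (\<Sum>r<N. Y i r * W r j)"
          using iT by (intro sum.mono_neutral_left) (auto simp: Yzero N_def)
        also have "\<dots> = ffr (x i) (cm j)" using newton[OF j] by simp
        finally show ?thesis using iT jT by (simp add: S_def P_def)
      next
        case jF: False
        have "(\<Sum>r<n. Y i r * (Wm * V) $$ (r, j)) = 0"
          using jF j by (intro sum.neutral) (auto simp: WV N_def)
        then have "(M * V) $$ (i, j) = 0"
          using MV_entry[OF i j] sum_split by simp
        then show ?thesis using iT jF j by (simp add: S_def P_def K_def)
      qed
    next
      case iF: False
      show ?thesis
      proof (cases "j < n")
        case True
        then show ?thesis using iF i j by (simp add: S_def P_def Z_def K_def)
      next
        case jF: False
        have split: "{..<N} = {..<n} \<union> {n..<N}" unfolding N_def by auto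
        have "(M * V) $$ (i, j) = (\<Sum>r<n. Y i r * (Wm * V) $$ (r, j)) + (\<Sum>r\<in>{n..<N}. Y i r * (Wm * V) $$ (r, j))"
          unfolding MV_entry[OF i j] split by (rule sum.union_disjoint) auto
        also have "(\<Sum>r<n. Y i r * (Wm * V) $$ (r, j)) = 0"
          using jF j by (intro sum.neutral) (auto simp: WV N_def)
        also have "(\<Sum>r\<in>{n..<N}. Y i r * (Wm * V) $$ (r, j)) = (\<Sum>r\<in>{n..<N}. Y i r * W r j)"
          using j by (intro sum.cong) (auto simp: WV)
        finally have "(M * V) $$ (i, j) = (\<Sum>r\<in>{n..<N}. Y i r * W r j)" by simp
        then show ?thesis using iF jF i j by (simp add: S_def P_def K_def)
      qed
    qed
  qed (use Mc V in \<open>auto simp: S_def P_def K_def\<close>)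
  have "det M = det (M * V)" using det_mult[OF Mc V] detV by simp
  also have "\<dots> = det S * det P"
    unfolding MV by (rule det_four_block_mat_upper_right_zero) (auto simp: S_def P_def Z_def)
  also have "det S = (\<Prod>i<n. fact i)"
  proof -
    define Yb where "Yb = mat n n (\<lambda>(i,r). Y i r)"
    have S_eq: "S = Yb * Wb"
      unfolding S_def Yb_def Wb_def
    proof (rule eq_matI)
      fix i j assume "i < dim_row (mat n n (\<lambda>(i,r). Y i r) * mat n n (\<lambda>(r,j). W r j))"
        "j < dim_col (mat n n (\<lambda>(i,r). Y i r) * mat n n (\<lambda>(r,j). W r j))"
      then have ij: "i < n" "j < n" by auto
      have "ffr (x i) (cm j) = (\<Sum>r<N. Y i r * W r j)" using ij newton[of j i] by (simp add: K_def)
      also have "\<dots> = (\<Sum>r<n. Y i r * W r j)"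
        using ij by (intro sum.mono_neutral_right) (auto simp: Yzero N_def)
      finally show "mat n n (\<lambda>(i,j). ffr (x i) (cm j)) $$ (i, j) = (mat n n (\<lambda>(i,r). Y i r) * mat n n (\<lambda>(r,j). W r j)) $$ (i, j)"
        using ij by (simp add: scalar_prod_def atLeast0LessThan)
    qed auto
    have Yb: "Yb \<in> carrier_mat n n" unfolding Yb_def by simp
    have "det Yb = (\<Prod>i<n. Yb $$ (i,i))"
      by (rule det_lower_tri'[OF Yb]) (auto simp: Yb_def Yzero)
    also have "\<dots> = (\<Prod>i<n. fact i)"
      by (intro prod.cong) (auto simp: Yb_def Y_def x_def ffr_nat_self)
    finally show ?thesis unfolding S_eq det_mult[OF Yb Wb] detWb by simp
  qed
  finally show ?thesis
    unfolding M_def P_def K_def N_def Y_def W_def x_def cm_def by (simp add: mult.assoc)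
qed

definition gam :: "nat \<Rightarrow> nat \<Rightarrow> nat \<Rightarrow> rat poly" where
  "gam L m r = (\<Sum>s\<in>{r..m}. smult (of_nat (s choose r) / fact (m - s))
     (ffr [:0, -1:] (s - r) * ffr [:of_nat m - of_nat L, 1:] (m - s) * ffr [:of_nat L, 1:] (m - s)))"

lemma degree_gam: "degree (gam L m r) \<le> 2 * m - 2 * r"
  unfolding gam_def
proof (rule degree_sum_le)
  fix s assume s: "s \<in> {r..m}"
  let ?p = "ffr [:0, -1::rat:] (s - r) * ffr [:of_nat m - of_nat L, 1:] (m - s) * ffr [:of_nat L, 1:] (m - s)"
  have "degree (smult (of_nat (s choose r) / fact (m - s)) ?p) \<le> degree ?p" by (rule degree_smult_le)
  also have "\<dots> \<le> degree (ffr [:0, -1::rat:] (s - r)) + degree (ffr [:of_nat m - of_nat L, 1::rat:] (m - s)) + degree (ffr [:of_nat L, 1::rat:] (m - s))"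
    by (meson add_mono_thms_linordered_semiring(3) degree_mult_le order_trans)
  also have "\<dots> \<le> (s - r) + (m - s) + (m - s)"
    using degree_ffr[of "[:0, -1::rat:]" "s - r"] degree_ffr[of "[:of_nat m - of_nat L, 1::rat:]" "m - s"]
      degree_ffr[of "[:of_nat L, 1::rat:]" "m - s"] by simp
  also have "\<dots> \<le> 2 * m - 2 * r" using s by arith
  finally show "degree (smult (of_nat (s choose r) / fact (m - s)) ?p) \<le> 2 * m - 2 * r" .
qed simp

lemma gam_zero: "m < r \<Longrightarrow> gam L m r = 0"
  unfolding gam_def by simp

lemma binom_rat: "(of_nat (N choose e) :: rat) = ffr (of_nat N) e / fact e"
  by (simp add: ffr_gchoose binomial_gbinomial)

lemma G_entry:
  fixes a :: rat and m L B k :: nat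
  assumes mB: "m < B" and kL: "L \<le> k"
  shows "(\<Sum>s<B. ffr (a - of_nat k) s * of_nat ((k - L + m) choose (k - L + s)) * ffr (of_nat k + of_nat L) (m - s))
       = (\<Sum>r<B. ffr a r * poly (gam L m r) (of_nat k))"
proof -
  define K :: rat where "K = of_nat k"
  define \<tau> where "\<tau> = (\<lambda>s r. of_nat (s choose r) / fact (m - s) * (ffr (- K) (s - r) * ffr (K - of_nat L + of_nat m) (m - s) * ffr (K + of_nat L) (m - s)))"
  have poly_gam: "poly (gam L m r) K = (\<Sum>s\<in>{r..m}. \<tau> s r)" for r
    unfolding gam_def \<tau>_def by (simp add: poly_sum poly_ffr algebra_simps)
  have trm: "ffr (a - K) s * of_nat ((k - L + m) choose (k - L + s)) * ffr (K + of_nat L) (m - s)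
      = (if s \<le> m then (\<Sum>r\<in>{0..s}. ffr a r * \<tau> s r) else 0)" for s
  proof (cases "s \<le> m")
    case True
    have c: "(k - L + m) choose (k - L + s) = (k - L + m) choose (m - s)"
      using True by (subst binomial_symmetric) (auto intro: arg_cong[where f="\<lambda>x. _ choose x"])
    have nat_eq: "(of_nat (k - L + m) :: rat) = K - of_nat L + of_nat m"
      using kL unfolding K_def by (simp add: of_nat_diff)
    have "ffr (a - K) s = (\<Sum>r\<in>{0..s}. of_nat (s choose r) * ffr a r * ffr (- K) (s - r))"
      using ffr_newton[of a "- K" s] by simp
    have "ffr (a - K) s * of_nat ((k - L + m) choose (k - L + s)) * ffr (K + of_nat L) (m - s)
       = (\<Sum>r\<in>{0..s}. of_nat (s choose r) * ffr a r * ffr (- K) (s - r)) * (ffr (K - of_nat L + of_nat m) (m - s) / fact (m - s)) * ffr (K + of_nat L) (m - s)"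
      unfolding c binom_rat[of "k - L + m" "m - s"] nat_eq \<open>ffr (a - K) s = _\<close> by simp
    also have "\<dots> = (\<Sum>r\<in>{0..s}. ffr a r * \<tau> s r)"
      unfolding sum_distrib_right \<tau>_def by (rule sum.cong) (auto simp: field_simps)
    finally show ?thesis using True by simp
  next
    case False
    then have "(k - L + m) choose (k - L + s) = 0" by simp
    then show ?thesis using False by simp
  qed
  have "(\<Sum>s<B. ffr (a - K) s * of_nat ((k - L + m) choose (k - L + s)) * ffr (K + of_nat L) (m - s))
      = (\<Sum>s<B. if s \<le> m then (\<Sum>r\<in>{0..s}. ffr a r * \<tau> s r) else 0)"
    using trm by simp
  also have "\<dots> = (\<Sum>s<B. \<Sum>r<B. if r \<le> s \<and> s \<le> m then ffr a r * \<tau> s r else 0)"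
  proof (rule sum.cong[OF refl])
    fix s assume "s \<in> {..<B}"
    then have "{0..s} = {..<B} \<inter> {r. r \<le> s}" by auto
    then show "(if s \<le> m then (\<Sum>r\<in>{0..s}. ffr a r * \<tau> s r) else 0) = (\<Sum>r<B. if r \<le> s \<and> s \<le> m then ffr a r * \<tau> s r else 0)"
      by (simp add: sum.inter_restrict)
  qed
  also have "\<dots> = (\<Sum>r<B. \<Sum>s<B. if r \<le> s \<and> s \<le> m then ffr a r * \<tau> s r else 0)"
    by (rule sum.swap)
  also have "\<dots> = (\<Sum>r<B. ffr a r * (\<Sum>s\<in>{r..m}. \<tau> s r))"
  proof (rule sum.cong[OF refl])
    fix r assume "r \<in> {..<B}"
    have "{r..m} = {..<B} \<inter> {s. r \<le> s \<and> s \<le> m}" using mB by auto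
    then show "(\<Sum>s<B. if r \<le> s \<and> s \<le> m then ffr a r * \<tau> s r else 0) = ffr a r * (\<Sum>s\<in>{r..m}. \<tau> s r)"
      by (simp add: sum.inter_restrict sum_distrib_left if_distrib cong: if_cong)
  qed
  finally show ?thesis unfolding K_def[symmetric] poly_gam by simp
qed

lemma G_poly:
  fixes a :: "nat \<Rightarrow> rat" and \<mu> :: "nat \<Rightarrow> nat" and L B :: nat
  assumes \<mu>B: "\<And>j. j < L \<Longrightarrow> \<mu> j < B"
  shows "\<exists>Q0. degree Q0 \<le> 2 * (\<Sum>j<L. \<mu> j) - 2 * (\<Sum>j<L. j) \<and>
    (\<forall>k \<ge> L. det (mat L L (\<lambda>(i,j). \<Sum>s<B. ffr (a i - of_nat k) s * of_nat ((k - L + \<mu> j) choose (k - L + s))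
        * ffr (of_nat k + of_nat L) (\<mu> j - s))) = poly Q0 (of_nat k))"
proof -
  define F where "F = PiE {..<L} (\<lambda>_. {..<B::nat})"
  have fF: "finite F" unfolding F_def by (simp add: finite_PiE)
  define Zf where "Zf = (\<lambda>f. det (mat L L (\<lambda>(i,j). ffr (a i) (f j))))"
  define Q0 where "Q0 = (\<Sum>f\<in>F. smult (Zf f) (\<Prod>j<L. gam L (\<mu> j) (f j)))"
  have val: "det (mat L L (\<lambda>(i,j). \<Sum>s<B. ffr (a i - of_nat k) s * of_nat ((k - L + \<mu> j) choose (k - L + s))
        * ffr (of_nat k + of_nat L) (\<mu> j - s))) = poly Q0 (of_nat k)" if kL: "L \<le> k" for k
  proof -
    have "mat L L (\<lambda>(i,j). \<Sum>s<B. ffr (a i - of_nat k) s * of_nat ((k - L + \<mu> j) choose (k - L + s))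
        * ffr (of_nat k + of_nat L) (\<mu> j - s)) = mat L L (\<lambda>(i,j). \<Sum>r<B. ffr (a i) r * poly (gam L (\<mu> j) r) (of_nat k))"
      by (rule eq_matI) (auto simp: G_entry[OF \<mu>B kL])
    also have "det \<dots> = (\<Sum>f\<in>F. (\<Prod>j<L. poly (gam L (\<mu> j) (f j)) (of_nat k)) * Zf f)"
      unfolding F_def Zf_def by (rule det_col_expand) simp
    also have "\<dots> = poly Q0 (of_nat k)"
      unfolding Q0_def by (simp add: poly_sum poly_prod mult.commute)
    finally show ?thesis .
  qed
  have deg: "degree Q0 \<le> 2 * (\<Sum>j<L. \<mu> j) - 2 * (\<Sum>j<L. j)"
    unfolding Q0_def
  proof (rule degree_sum_le[OF fF])
    fix f assume fF: "f \<in> F"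
    show "degree (smult (Zf f) (\<Prod>j<L. gam L (\<mu> j) (f j))) \<le> 2 * (\<Sum>j<L. \<mu> j) - 2 * (\<Sum>j<L. j)"
    proof (cases "Zf f = 0")
      case True then show ?thesis by simp
    next
      case Znz: False
      have inj: "inj_on f {..<L}"
      proof (rule inj_onI, rule ccontr)
        fix i j assume i: "i \<in> {..<L}" and j: "j \<in> {..<L}" and fij: "f i = f j" and ne: "i \<noteq> j"
        have "Zf f = 0" unfolding Zf_def
          by (rule det_identical_columns[of _ L i j]) (use i j fij ne in auto)
        with Znz show False by simp
      qed
      show ?thesis
      proof (cases "\<exists>j<L. \<mu> j < f j")
        case True
        then obtain j where j: "j < L" "\<mu> j < f j" by auto
        have p0: "(\<Prod>j<L. gam L (\<mu> j) (f j)) = 0"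
          using j gam_zero[of "\<mu> j" "f j" L] by (intro prod_zero) auto
        show ?thesis unfolding p0 by simp
      next
        case False
        then have le: "\<And>j. j < L \<Longrightarrow> f j \<le> \<mu> j" using not_less by blast
        have "degree (smult (Zf f) (\<Prod>j<L. gam L (\<mu> j) (f j))) \<le> degree (\<Prod>j<L. gam L (\<mu> j) (f j))"
          by (rule degree_smult_le)
        also have "\<dots> \<le> (\<Sum>j<L. degree (gam L (\<mu> j) (f j)))"
          using degree_prod_sum_le[of "{..<L}" "\<lambda>j. gam L (\<mu> j) (f j)"] by (simp add: o_def)
        also have "\<dots> \<le> (\<Sum>j<L. 2 * \<mu> j - 2 * f j)"
          by (intro sum_mono degree_gam)
        also have "\<dots> = (\<Sum>j<L. 2 * \<mu> j) - (\<Sum>j<L. 2 * f j)"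
          by (rule sum_subtractf_nat) (use le in auto)
        also have "\<dots> = 2 * (\<Sum>j<L. \<mu> j) - 2 * (\<Sum>j<L. f j)"
          by (simp add: sum_distrib_left)
        also have "\<dots> \<le> 2 * (\<Sum>j<L. \<mu> j) - 2 * (\<Sum>j<L. j)"
          using sum_inj_lower[OF inj] by simp
        finally show ?thesis .
      qed
    qed
  qed
  show ?thesis using deg val by blast
qed

lemma P_entry:
  fixes bb u :: rat and n m B :: nat
  shows "(\<Sum>r\<in>{n..<n+B}. ffr bb r * of_nat ((n + m) choose r) * ffr u (n + m - r))
    = ffr bb n * (\<Sum>s<B. ffr (bb - of_nat n) s * of_nat ((n + m) choose (n + s)) * ffr u (m - s))"
proof -
  have "(\<Sum>r\<in>{n..<n+B}. ffr bb r * of_nat ((n + m) choose r) * ffr u (n + m - r))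
      = (\<Sum>s<B. ffr bb (n + s) * of_nat ((n + m) choose (n + s)) * ffr u (n + m - (n + s)))"
    by (rule sum.reindex_bij_witness[where j="\<lambda>r. r - n" and i="\<lambda>s. n + s"]) auto
  also have "\<dots> = ffr bb n * (\<Sum>s<B. ffr (bb - of_nat n) s * of_nat ((n + m) choose (n + s)) * ffr u (m - s))"
    by (simp add: sum_distrib_left ffr_add mult_ac)
  finally show ?thesis .
qed

lemma vdm_split:
  assumes "L \<le> k"
  shows "vdm k c = vdm L c * (\<Prod>j\<in>{L+1..k}. \<Prod>i\<in>{1..L}. c j - c i) * (\<Prod>j\<in>{L+1..k}. \<Prod>i\<in>{L+1..<j}. c j - c i)"
proof -
  have u: "{1..k} = {1..L} \<union> {L+1..k}" using assms by auto
  have "vdm k c = vdm L c * (\<Prod>j\<in>{L+1..k}. \<Prod>i\<in>{1..<j}. c j - c i)"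
    unfolding vdm_def u by (subst prod.union_disjoint) auto
  also have "(\<Prod>j\<in>{L+1..k}. \<Prod>i\<in>{1..<j}. c j - c i) = (\<Prod>j\<in>{L+1..k}. (\<Prod>i\<in>{1..L}. c j - c i) * (\<Prod>i\<in>{L+1..<j}. c j - c i))"
  proof (rule prod.cong[OF refl])
    fix j assume j: "j \<in> {L+1..k}"
    then have u2: "{1..<j} = {1..L} \<union> {L+1..<j}" by auto
    show "(\<Prod>i\<in>{1..<j}. c j - c i) = (\<Prod>i\<in>{1..L}. c j - c i) * (\<Prod>i\<in>{L+1..<j}. c j - c i)"
      unfolding u2 by (subst prod.union_disjoint) auto
  qed
  finally show ?thesis by (simp add: prod.distrib mult.assoc)
qed

lemma vdm_shift: "vdm L (cseq k t eps) = vdm L (cseq k' t eps)"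
  unfolding vdm_def cseq_def by simp

lemma superfact:
  "(\<Prod>j\<in>{L+1..k}. \<Prod>i\<in>{L+1..<j}. (of_int (int j - int i) :: rat)) = (\<Prod>q<k-L. fact q)"
proof -
  have inner: "(\<Prod>i\<in>{L+1..<j}. (of_int (int j - int i) :: rat)) = fact (j - L - 1)" if "L + 1 \<le> j" for j
  proof -
    have "(\<Prod>i\<in>{L+1..<j}. (of_int (int j - int i) :: rat)) = (\<Prod>d\<in>{1..j - L - 1}. (of_nat d :: rat))"
      by (rule prod.reindex_bij_witness[where i="\<lambda>d. j - d" and j="\<lambda>i. j - i"]) (use that in auto)
    also have "\<dots> = fact (j - L - 1)" by (simp add: fact_prod)
    finally show ?thesis .
  qed
  have "(\<Prod>j\<in>{L+1..k}. \<Prod>i\<in>{L+1..<j}. (of_int (int j - int i) :: rat)) = (\<Prod>j\<in>{L+1..k}. fact (j - L - 1))"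
  proof (rule prod.cong[OF refl])
    fix j assume "j \<in> {L+1..k}"
    then show "(\<Prod>i\<in>{L+1..<j}. (of_int (int j - int i) :: rat)) = fact (j - L - 1)"
      by (intro inner) auto
  qed
  also have "\<dots> = (\<Prod>q<k-L. fact q)"
    by (rule prod.reindex_bij_witness[where i="\<lambda>q. L + 1 + q" and j="\<lambda>j. j - L - 1"]) auto
  finally show ?thesis .
qed

lemma cross_fact:
  fixes a :: rat
  assumes "L \<le> k"
  shows "(\<Prod>j\<in>{L+1..k}. (of_nat j - 1 - a)) = (-1)^(k-L) * ffr (a - of_nat L) (k - L)"
proof -
  have "(\<Prod>j\<in>{L+1..k}. (of_nat j - 1 - a)) = (\<Prod>q<k-L. (-1) * (a - of_nat L - of_nat q))"
    by (rule prod.reindex_bij_witness[where i="\<lambda>q. L + 1 + q" and j="\<lambda>j. j - L - 1"]) (auto simp: algebra_simps)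
  also have "\<dots> = (-1)^(k-L) * ffr (a - of_nat L) (k - L)"
    by (subst prod.distrib) (simp add: ffr_def)
  finally show ?thesis .
qed

theorem theorem4:
  fixes s t :: nat and lam eps :: "nat \<Rightarrow> nat"
  assumes "\<forall>i j. 1 \<le> i \<longrightarrow> i \<le> j \<longrightarrow> j \<le> s \<longrightarrow> lam j \<le> lam i"
  shows "\<exists>Q :: rat poly. degree Q \<le> 2 * (\<Sum>i=1..s. lam i) \<and>
    (\<forall>k \<ge> max s t.
       det (mat k k (\<lambda>(i, j). of_int (desc_fact (cseq k t eps (i + 1))
                                   (ext0 s lam (j + 1) + k - (j + 1)))) :: rat mat)
       = (-1) ^ (k * (k - 1) div 2) * of_int (vdm k (cseq k t eps)) * poly Q (of_nat k))"
proof -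
  define L where "L = max s t"
  define lam' where "lam' = (\<lambda>j. ext0 s lam (j+1))"
  define \<mu> where "\<mu> = (\<lambda>j. lam' (L - 1 - j) + j)"
  define Sl where "Sl = (\<Sum>i=1..s. lam i)"
  define B where "B = Sl + L"
  define aa where "aa = (\<lambda>i. (of_int (int i - int (ext0 t eps (i+1))) :: rat))"
  define D where "D = vdm L (cseq L t eps)"
  have sL: "s \<le> L" and tL: "t \<le> L" unfolding L_def by auto
  have lamle: "lam' j \<le> Sl" for j
  proof (cases "j + 1 \<le> s")
    case True
    then have "lam (j+1) \<le> (\<Sum>i=1..s. lam i)" by (intro member_le_sum) auto
    then show ?thesis using True unfolding lam'_def ext0_def Sl_def by simp
  next
    case False
    then show ?thesis unfolding lam'_def ext0_def by simp
  qed
  have \<mu>B: "\<mu> j < B" if "j < L" for j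
    using lamle[of "L - 1 - j"] that unfolding \<mu>_def B_def by linarith
  obtain Q0 where Q0deg: "degree Q0 \<le> 2 * (\<Sum>j<L. \<mu> j) - 2 * (\<Sum>j<L. j)"
    and Q0val: "\<And>k. L \<le> k \<Longrightarrow> det (mat L L (\<lambda>(i,j). \<Sum>q<B. ffr (aa i - of_nat k) q * of_nat ((k - L + \<mu> j) choose (k - L + q))
        * ffr (of_nat k + of_nat L) (\<mu> j - q))) = poly Q0 (of_nat k)"
    using G_poly[where a=aa and \<mu>=\<mu> and L=L and B=B, OF \<mu>B] by blast
  have sum_mu: "2 * (\<Sum>j<L. \<mu> j) - 2 * (\<Sum>j<L. j) = 2 * Sl"
  proof -
    have "(\<Sum>j<L. \<mu> j) = (\<Sum>j<L. lam' (L - Suc j)) + (\<Sum>j<L. j)" unfolding \<mu>_def by (simp add: sum.distrib)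
    moreover have "(\<Sum>j<L. lam' (L - Suc j)) = (\<Sum>j<L. lam' j)"
      by (rule sum.nat_diff_reindex)
    moreover have "(\<Sum>j<L. lam' j) = Sl"
    proof -
      have "(\<Sum>j<L. lam' j) = (\<Sum>j<s. lam' j)"
        using sL by (intro sum.mono_neutral_right) (auto simp: lam'_def ext0_def)
      also have "\<dots> = (\<Sum>i=1..s. lam i)"
        by (rule sum.reindex_bij_witness[where i="\<lambda>i. i - 1" and j="\<lambda>j. j + 1"]) (auto simp: lam'_def ext0_def)
      finally show ?thesis unfolding Sl_def .
    qed
    ultimately show ?thesis by simp
  qed
  define Q where "Q = smult (1 / of_int D) Q0"
  have degQ: "degree Q \<le> 2 * Sl"
    using degree_smult_le[of "1 / of_int D" Q0] Q0deg sum_mu unfolding Q_def by linarith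
  have main: "det (mat k k (\<lambda>(i, j). of_int (desc_fact (cseq k t eps (i + 1))
                                   (ext0 s lam (j + 1) + k - (j + 1)))) :: rat mat)
       = (-1) ^ (k * (k - 1) div 2) * of_int (vdm k (cseq k t eps)) * poly Q (of_nat k)"
    if kst: "max s t \<le> k" for k
  proof -
    have kL: "L \<le> k" using kst unfolding L_def .
    define n where "n = k - L"
    have kn: "k = n + L" unfolding n_def using kL by simp
    define Mk where "Mk = (mat k k (\<lambda>(i, j). of_int (desc_fact (cseq k t eps (i + 1))
                                   (ext0 s lam (j + 1) + k - (j + 1)))) :: rat mat)"
    define M1 where "M1 = mat k k (\<lambda>(i,j). Mk $$ (i, k - 1 - j))"
    have Mk: "Mk \<in> carrier_mat k k" unfolding Mk_def by simp
    have d1: "det M1 = (-1)^(k*(k-1) div 2) * det Mk" unfolding M1_def by (rule det_rev_cols[OF Mk])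
    have M1: "M1 \<in> carrier_mat (n+L) (n+L)" unfolding M1_def kn by simp
    have d2: "det M1 = (-1)^(n*L) * det (mat (n + L) (n + L) (\<lambda>(i,j). M1 $$ (if i < n then i + L else i - n, j)))"
      by (rule det_swap_rows[OF M1])
    define u where "u = (of_nat k + of_nat L :: rat)"
    define bb where "bb = (\<lambda>i. aa i - of_nat L)"
    define x where "x = (\<lambda>i. if i < n then u + of_nat i else u + bb (i - n))"
    define cm where "cm = (\<lambda>j. if j < n then j else n + \<mu> (j - n))"
    have M2: "mat (n + L) (n + L) (\<lambda>(i,j). M1 $$ (if i < n then i + L else i - n, j)) = mat (n+L) (n+L) (\<lambda>(i,j). ffr (x i) (cm j))"
    proof (rule eq_matI)
      fix i j assume "i < dim_row (mat (n+L) (n+L) (\<lambda>(i,j). ffr (x i) (cm j)))" "j < dim_col (mat (n+L) (n+L) (\<lambda>(i,j). ffr (x i) (cm j)))"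
      then have i: "i < n + L" and j: "j < n + L" by auto
      define \<rho> where "\<rho> = (if i < n then i + L else i - n)"
      have \<rho>: "\<rho> < k" using i kn unfolding \<rho>_def by auto
      have jj: "k - 1 - j < k" using j kn by auto
      have e1: "M1 $$ (\<rho>, j) = of_int (desc_fact (cseq k t eps (\<rho> + 1)) (ext0 s lam (k - 1 - j + 1) + k - (k - 1 - j + 1)))"
        unfolding M1_def Mk_def using \<rho> j jj kn by simp
      have rowval: "(of_int (cseq k t eps (\<rho> + 1)) :: rat) = x i"
      proof (cases "i < n")
        case True
        then have "ext0 t eps (\<rho> + 1) = 0" unfolding \<rho>_def ext0_def using tL by auto
        then show ?thesis using True unfolding \<rho>_def cseq_def x_def u_def by simp
      next
        case False
        then show ?thesis unfolding \<rho>_def cseq_def x_def u_def bb_def aa_def by simp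
      qed
      have colval: "ext0 s lam (k - 1 - j + 1) + k - (k - 1 - j + 1) = cm j"
      proof (cases "j < n")
        case True
        have h1: "k - 1 - j + 1 = k - j" using True kn by simp
        have h2: "\<not> k - j \<le> s" using True kn sL by simp
        have "ext0 s lam (k - 1 - j + 1) = 0" unfolding ext0_def h1 using h2 by simp
        then show ?thesis using True kn unfolding cm_def h1 by simp
      next
        case False
        define j' where "j' = j - n"
        have j': "j' < L" "j = n + j'" using False j unfolding j'_def by auto
        have a1: "k - 1 - j + 1 = L - j'" using j' kn by simp
        have h: "L - 1 - j' + 1 = L - j'" using j' by simp
        have a2: "ext0 s lam (L - j') = lam' (L - 1 - j')" unfolding lam'_def h ..
        have a3: "cm j = n + (lam' (L - 1 - j') + j')" using False unfolding cm_def \<mu>_def j'_def by simp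
        show ?thesis unfolding a1 a2 a3 using j' kn by simp
      qed
      show "mat (n + L) (n + L) (\<lambda>(i,j). M1 $$ (if i < n then i + L else i - n, j)) $$ (i, j) = mat (n+L) (n+L) (\<lambda>(i,j). ffr (x i) (cm j)) $$ (i, j)"
        using i j e1 rowval colval unfolding \<rho>_def by (simp add: desc_fact_ffr)
    qed auto
    have d3: "det (mat (n+L) (n+L) (\<lambda>(i,j). ffr (x i) (cm j))) = (\<Prod>i<n. fact i) *
       det (mat L L (\<lambda>(i,j). \<Sum>r\<in>{n..<n+B}. ffr (bb i) r * of_nat ((n + \<mu> j) choose r) * ffr u (n + \<mu> j - r)))"
      using core[where u=u and b=bb and \<mu>=\<mu> and n=n and L=L and B=B, OF \<mu>B] unfolding x_def cm_def by simp
    define G where "G = mat L L (\<lambda>(i,j). \<Sum>q<B. ffr (aa i - of_nat k) q * of_nat ((k - L + \<mu> j) choose (k - L + q))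
        * ffr (of_nat k + of_nat L) (\<mu> j - q))"
    have Peq: "mat L L (\<lambda>(i,j). \<Sum>r\<in>{n..<n+B}. ffr (bb i) r * of_nat ((n + \<mu> j) choose r) * ffr u (n + \<mu> j - r))
       = mat L L (\<lambda>(i,j). ffr (bb i) n * G $$ (i,j))"
    proof (rule eq_matI)
      fix i j assume "i < dim_row (mat L L (\<lambda>(i,j). ffr (bb i) n * G $$ (i,j)))" "j < dim_col (mat L L (\<lambda>(i,j). ffr (bb i) n * G $$ (i,j)))"
      then have i: "i < L" and j: "j < L" by auto
      have nb: "bb i - of_nat (k - L) = aa i - of_nat k" unfolding bb_def using kL by (simp add: of_nat_diff)
      show "mat L L (\<lambda>(i,j). \<Sum>r\<in>{n..<n+B}. ffr (bb i) r * of_nat ((n + \<mu> j) choose r) * ffr u (n + \<mu> j - r)) $$ (i, j)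
          = mat L L (\<lambda>(i,j). ffr (bb i) n * G $$ (i,j)) $$ (i, j)"
      proof -
        have "(\<Sum>r\<in>{n..<n+B}. ffr (bb i) r * of_nat ((n + \<mu> j) choose r) * ffr u (n + \<mu> j - r))
           = ffr (bb i) n * (\<Sum>q<B. ffr (bb i - of_nat n) q * of_nat ((n + \<mu> j) choose (n + q)) * ffr u (\<mu> j - q))"
          by (rule P_entry)
        also have "\<dots> = ffr (bb i) n * G $$ (i,j)"
          using i j unfolding G_def n_def u_def nb by simp
        finally show ?thesis using i j by simp
      qed
    qed auto
    have G: "G \<in> carrier_mat L L" unfolding G_def by simp
    have d4: "det (mat L L (\<lambda>(i,j). ffr (bb i) n * G $$ (i,j))) = (\<Prod>i<L. ffr (bb i) n) * det G"
      by (rule det_scale_rows[OF G])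
    have dG: "det G = poly Q0 (of_nat k)" unfolding G_def by (rule Q0val[OF kL])
    have sq: "(-1::rat)^m * (-1)^m = 1" for m
    proof -
      have "(-1::rat)^m * (-1)^m = ((-1) * (-1))^m" by (rule power_mult_distrib[symmetric])
      then show ?thesis by simp
    qed
    have detMk: "det Mk = (-1)^(k*(k-1) div 2) * ((-1)^(n*L) * ((\<Prod>i<n. fact i) * ((\<Prod>i<L. ffr (bb i) n) * poly Q0 (of_nat k))))"
    proof -
      have "det Mk = ((-1)^(k*(k-1) div 2) * (-1)^(k*(k-1) div 2)) * det Mk" using sq by simp
      also have "\<dots> = (-1)^(k*(k-1) div 2) * det M1" unfolding d1 by (simp only: mult.assoc)
      also have "det M1 = (-1)^(n*L) * ((\<Prod>i<n. fact i) * ((\<Prod>i<L. ffr (bb i) n) * poly Q0 (of_nat k)))"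
        unfolding d2 M2 d3 Peq d4 dG by (rule refl)
      finally show ?thesis .
    qed
    define c where "c = cseq k t eps"
    have vdmk: "(of_int (vdm k c) :: rat) = of_int D * ((-1)^(n*L) * (\<Prod>i<L. ffr (bb i) n) * (\<Prod>i<n. fact i))"
    proof -
      have vL: "vdm L c = D" unfolding c_def D_def by (rule vdm_shift)
      have cbig: "c j = int k + int j - 1" if "L < j" for j
        using that tL unfolding c_def cseq_def ext0_def by auto
      have X2: "(of_int (\<Prod>j\<in>{L+1..k}. \<Prod>i\<in>{L+1..<j}. c j - c i) :: rat) = (\<Prod>i<n. fact i)"
      proof -
        have "(of_int (\<Prod>j\<in>{L+1..k}. \<Prod>i\<in>{L+1..<j}. c j - c i) :: rat) = (\<Prod>j\<in>{L+1..k}. \<Prod>i\<in>{L+1..<j}. (of_int (int j - int i) :: rat))"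
          unfolding of_int_prod by (intro prod.cong refl) (auto simp: cbig)
        also have "\<dots> = (\<Prod>i<n. fact i)" unfolding n_def by (rule superfact)
        finally show ?thesis .
      qed
      have X1: "(of_int (\<Prod>j\<in>{L+1..k}. \<Prod>i\<in>{1..L}. c j - c i) :: rat) = (-1)^(n*L) * (\<Prod>i<L. ffr (bb i) n)"
      proof -
        have "(of_int (\<Prod>j\<in>{L+1..k}. \<Prod>i\<in>{1..L}. c j - c i) :: rat) = (\<Prod>i\<in>{1..L}. \<Prod>j\<in>{L+1..k}. (of_int (c j - c i) :: rat))"
          unfolding of_int_prod by (rule prod.swap)
        also have "\<dots> = (\<Prod>i\<in>{1..L}. \<Prod>j\<in>{L+1..k}. (of_nat j - 1 - aa (i - 1)))"
        proof (intro prod.cong refl)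
          fix i j assume i: "i \<in> {1..L}" and j: "j \<in> {L+1..k}"
          have "c i = int k + int (i - 1) - int (ext0 t eps (i - 1 + 1))" using i unfolding c_def cseq_def by simp
          then show "(of_int (c j - c i) :: rat) = of_nat j - 1 - aa (i - 1)"
            using i j cbig[of j] unfolding aa_def by simp
        qed
        also have "\<dots> = (\<Prod>i\<in>{1..L}. (-1)^n * ffr (bb (i - 1)) n)"
          unfolding bb_def n_def by (intro prod.cong refl cross_fact kL)
        also have "\<dots> = (\<Prod>i<L. (-1)^n * ffr (bb i) n)"
          by (rule prod.reindex_bij_witness[where i="\<lambda>i. i + 1" and j="\<lambda>i. i - 1"]) auto
        also have "\<dots> = (-1)^(n*L) * (\<Prod>i<L. ffr (bb i) n)"
          by (simp add: prod.distrib power_mult)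
        finally show ?thesis .
      qed
      show ?thesis
        unfolding vdm_split[OF kL, of c] vL of_int_mult X1 X2 by (simp add: mult_ac)
    qed
    show ?thesis
    proof (cases "D = 0")
      case False
      have "det Mk = (-1) ^ (k * (k - 1) div 2) * of_int (vdm k c) * poly Q (of_nat k)"
        unfolding detMk vdmk Q_def using False by (simp add: field_simps)
      then show ?thesis unfolding Mk_def c_def .
    next
      case True
      have "vdm L c = 0" using True unfolding c_def D_def by (simp add: vdm_shift[of L k t eps L])
      then obtain j i where j: "j \<in> {1..L}" and i: "i \<in> {1..<j}" and cij: "c j - c i = 0"
        unfolding vdm_def by (auto simp: prod_zero_iff)
      have "det Mk = 0"
      proof (rule det_identical_rows[OF Mk, of "i - 1" "j - 1"])
        show "i - 1 \<noteq> j - 1" "i - 1 < k" "j - 1 < k" using i j kL by auto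
        show "row Mk (i - 1) = row Mk (j - 1)"
          using i j kL cij unfolding Mk_def c_def by (intro eq_vecI) auto
      qed
      then show ?thesis unfolding Mk_def Q_def True by simp
    qed
  qed
  show ?thesis
    using degQ main unfolding Sl_def by blast
qed

end
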